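(* Suppose we are given two triples of real numbers $(x,y,z)$ and $(\tilde x,\tilde y,\tilde z)$ satisfying: (i) $x,\tilde x\in(-1,0)$ and $p_{0,-1}(\tilde x)>p_{0,-1}(x)$; (ii) $y\in(0,-x)$, $\tilde y\in(0,-\tilde x)$ and $p_{\tilde x,1}(\tilde y)\ge p_{x,1}(y)+\big(p_{0,-1}(\tilde x)-p_{0,-1}(x)\big)$; (iii) $0\le z<y$, $\tilde z\in(-\tilde y,\tilde y)$ and $$p_{\tilde y,\tilde x}(\tilde z)\ge p_{y,x}(z)+\big(p_{0,-\tilde x}(\tilde y)-p_{0,-x}(y)\big)+\ln\frac{\tilde y-\tilde x}{y-x}-\Big(\big(p_{\tilde x,1}(\tilde y)-p_{x,1}(y)\big)-\big(p_{0,-1}(\tilde x)-p_{0,-1}(x)\big)\Big).$$ Then $p_{\tilde y,-\tilde y}(\tilde z)>p_{y,-y}(z)$.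
   Context: Poincaré coordinates: for real $p\neq q$ and $w$ strictly between $p$ and $q$ (the oriented open interval $(p,q)$, where $p>q$ is allowed), $p_{p,q}(w)=\ln\frac{w-p}{q-w}$. *)

theory Defs
  imports Complex_Main
begin

definition poinc :: "real \<Rightarrow> real \<Rightarrow> real \<Rightarrow> real" where
  "poinc p q w = ln ((w - p) / (q - w))"

end

theory Submission
  imports Defs
begin

lemma c1_aux:
  fixes a A y Y :: real
  assumes "0<a" "a<A" "A<1" "0<y" "y<a" "0<Y" "Y<A"
    and hK: "(y+a)*(1-a)*(1-Y)*A \<le> (Y+A)*(1-A)*(1-y)*a"
  shows "(A-Y)*(1-y)*a^2*(1-A) < (a-y)*(1-Y)*A^2*(1-a)"
proof -
  define K where "K = (y+a)*(1-a)/((1-y)*a)"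
  define K' where "K' = (Y+A)*(1-A)/((1-Y)*A)"
  have KK: "K \<le> K'" using hK assms unfolding K_def K'_def by (simp add: divide_simps mult_ac)
  have K'2: "K' < 2"
  proof -
    have "2*((1-Y)*A) - (Y+A)*(1-A) = (A-Y)*(1+A)" by (simp add: algebra_simps)
    moreover have "(A-Y)*(1+A) > 0" using assms by simp
    ultimately have "(Y+A)*(1-A) < 2*((1-Y)*A)" by linarith
    moreover have "(1-Y)*A > 0" using assms by simp
    ultimately show ?thesis unfolding K'_def by (simp add: divide_simps)
  qed
  have nz: "1-y \<noteq> 0" "a \<noteq> 0" "1+a \<noteq> 0" "1-Y \<noteq> 0" "A \<noteq> 0" "1+A \<noteq> 0"
    using assms by auto
  have e: "2-K = (a-y)*(1+a)/((1-y)*a)"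
    unfolding K_def using nz by (simp add: field_simps; simp add: algebra_simps)?
  have e': "2-K' = (A-Y)*(1+A)/((1-Y)*A)"
    unfolding K'_def using nz by (simp add: field_simps; simp add: algebra_simps)?
  have idK: "(a-y)*(1-a)/((1-y)*a^2) = (2-K)*(1-a)/((1+a)*a)"
  proof -
    have "(2-K)*(1-a)/((1+a)*a) = ((1+a)*((a-y)*(1-a))) / ((1+a)*((1-y)*a^2))"
      unfolding e by (simp add: power2_eq_square mult_ac)
    also have "\<dots> = (a-y)*(1-a)/((1-y)*a^2)" using nz by (rule_tac mult_divide_mult_cancel_left) auto
    finally show ?thesis by simp
  qed
  have idK': "(A-Y)*(1-A)/((1-Y)*A^2) = (2-K')*(1-A)/((1+A)*A)"
  proof -
    have "(2-K')*(1-A)/((1+A)*A) = ((1+A)*((A-Y)*(1-A))) / ((1+A)*((1-Y)*A^2))"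
      unfolding e' by (simp add: power2_eq_square mult_ac)
    also have "\<dots> = (A-Y)*(1-A)/((1-Y)*A^2)" using nz by (rule_tac mult_divide_mult_cancel_left) auto
    finally show ?thesis by simp
  qed
  have m1: "(1-A)/((1+A)*A) < (1-a)/((1+a)*a)"
  proof -
    have "(1-A)*((1+a)*a) < (1-a)*((1+A)*A)"
    proof -
      have "(1-a)*((1+A)*A) - (1-A)*((1+a)*a) = (A-a)*(1+a+A-a*A)" by (simp add: algebra_simps)
      moreover have "(A-a)*(1+a+A-a*A) > 0" using assms by (intro mult_pos_pos) (auto simp: algebra_simps, smt (verit) mult_less_cancel_right1)
      ultimately show ?thesis by linarith
    qed
    thus ?thesis using assms by (simp add: divide_simps)
  qed
  have "(2-K')*((1-A)/((1+A)*A)) \<le> (2-K)*((1-A)/((1+A)*A))"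
    using KK assms by (intro mult_right_mono) auto
  also have "\<dots> < (2-K)*((1-a)/((1+a)*a))"
    using m1 KK K'2 by (intro mult_strict_left_mono) auto
  finally have "(A-Y)*(1-A)/((1-Y)*A^2) < (a-y)*(1-a)/((1-y)*a^2)" using idK idK' by simp
  thus ?thesis using assms by (simp add: divide_simps mult_ac)
qed

lemma c0_aux:
  fixes a A y Y :: real
  assumes "0<a" "a<A" "A<1" "0<y" "y<a" "0<Y" "Y<A"
    and hK: "(y+a)*(1-a)*(1-Y)*A \<le> (Y+A)*(1-A)*(1-y)*a"
  shows "(A-Y)*(1-A)*(y+a)*(1-y)*a < (a-y)*(1-a)*(Y+A)*(1-Y)*A"
proof -
  define K where "K = (y+a)*(1-a)/((1-y)*a)"
  define K' where "K' = (Y+A)*(1-A)/((1-Y)*A)"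
  have KK: "K \<le> K'" using hK assms unfolding K_def K'_def by (simp add: divide_simps mult_ac)
  have Kpos: "K > 0" unfolding K_def using assms by simp
  have K'2: "K' < 2"
  proof -
    have "2*((1-Y)*A) - (Y+A)*(1-A) = (A-Y)*(1+A)" by (simp add: algebra_simps)
    moreover have "(A-Y)*(1+A) > 0" using assms by simp
    ultimately have "(Y+A)*(1-A) < 2*((1-Y)*A)" by linarith
    moreover have "(1-Y)*A > 0" using assms by simp
    ultimately show ?thesis unfolding K'_def by (simp add: divide_simps)
  qed
  have nz: "1-y \<noteq> 0" "a \<noteq> 0" "1+a \<noteq> 0" "1-Y \<noteq> 0" "A \<noteq> 0" "1+A \<noteq> 0"
    "y+a \<noteq> 0" "Y+A \<noteq> 0" "1-a \<noteq> 0" "1-A \<noteq> 0"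
    using assms by auto
  have e: "2-K = (a-y)*(1+a)/((1-y)*a)"
    unfolding K_def using nz by (simp add: field_simps; simp add: algebra_simps)?
  have e': "2-K' = (A-Y)*(1+A)/((1-Y)*A)"
    unfolding K'_def using nz by (simp add: field_simps; simp add: algebra_simps)?
  have r: "1 + (1-a)/(K*a) = (1+a)/(y+a)"
  proof -
    have "K*a = (y+a)*(1-a)/(1-y)" unfolding K_def using nz by simp
    hence "(1-a)/(K*a) = ((1-a)*(1-y))/((1-a)*(y+a))" by (simp add: mult_ac)
    also have "\<dots> = (1-y)/(y+a)" using nz by (rule_tac mult_divide_mult_cancel_left) auto
    finally show ?thesis using nz by (simp add: field_simps)
  qed
  have r': "1 + (1-A)/(K'*A) = (1+A)/(Y+A)"
  proof -
    have "K'*A = (Y+A)*(1-A)/(1-Y)" unfolding K'_def using nz by simp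
    hence "(1-A)/(K'*A) = ((1-A)*(1-Y))/((1-A)*(Y+A))" by (simp add: mult_ac)
    also have "\<dots> = (1-Y)/(Y+A)" using nz by (rule_tac mult_divide_mult_cancel_left) auto
    finally show ?thesis using nz by (simp add: field_simps)
  qed
  have q: "(2-K) * ((1-a)/(1+a)^2) * (1 + (1-a)/(K*a)) = (a-y)*(1-a)/((1-y)*(y+a)*a)"
  proof -
    have "(2-K) * ((1-a)/(1+a)^2) * (1 + (1-a)/(K*a)) = ((1+a)^2*((a-y)*(1-a))) / ((1+a)^2*((1-y)*(y+a)*a))"
      unfolding e r by (simp add: power2_eq_square mult_ac)
    also have "\<dots> = (a-y)*(1-a)/((1-y)*(y+a)*a)" using nz by (rule_tac mult_divide_mult_cancel_left) auto
    finally show ?thesis .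
  qed
  have q': "(2-K') * ((1-A)/(1+A)^2) * (1 + (1-A)/(K'*A)) = (A-Y)*(1-A)/((1-Y)*(Y+A)*A)"
  proof -
    have "(2-K') * ((1-A)/(1+A)^2) * (1 + (1-A)/(K'*A)) = ((1+A)^2*((A-Y)*(1-A))) / ((1+A)^2*((1-Y)*(Y+A)*A))"
      unfolding e' r' by (simp add: power2_eq_square mult_ac)
    also have "\<dots> = (A-Y)*(1-A)/((1-Y)*(Y+A)*A)" using nz by (rule_tac mult_divide_mult_cancel_left) auto
    finally show ?thesis .
  qed
  have cA: "(1-A)/(1+A)^2 < (1-a)/(1+a)^2"
  proof -
    have "(1-A)*(1+a)^2 < (1-a)*(1+A)^2"
      using assms by (intro mult_strict_mono power_strict_mono) auto
    thus ?thesis using assms by (simp add: divide_simps)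
  qed
  have rA: "(1-A)/(K*A) < (1-a)/(K*a)"
    using assms Kpos by (intro frac_less) auto
  have rK: "(1-A)/(K'*A) \<le> (1-A)/(K*A)"
    using assms Kpos KK by (intro divide_left_mono mult_right_mono) auto
  have "(2-K') * ((1-A)/(1+A)^2) * (1 + (1-A)/(K'*A)) \<le> (2-K) * ((1-A)/(1+A)^2) * (1 + (1-A)/(K*A))"
    using KK K'2 rK assms Kpos by (intro mult_mono) auto
  also have "\<dots> = (2-K) * (((1-A)/(1+A)^2) * (1 + (1-A)/(K*A)))" by simp
  also have "\<dots> < (2-K) * (((1-a)/(1+a)^2) * (1 + (1-a)/(K*a)))"
    using KK K'2 cA rA assms Kpos by (intro mult_strict_left_mono mult_strict_mono) auto
  also have "\<dots> = (2-K) * ((1-a)/(1+a)^2) * (1 + (1-a)/(K*a))" by simp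
  finally have "(A-Y)*(1-A)/((1-Y)*(Y+A)*A) < (a-y)*(1-a)/((1-y)*(y+a)*a)" using q q' by simp
  thus ?thesis using assms by (simp add: divide_simps mult_ac)
qed

lemma Fid: "\<lbrakk>1-a \<noteq> 0; a \<noteq> 0; 1-A \<noteq> 0; A \<noteq> 0; A-Y \<noteq> 0; a-y \<noteq> 0; y \<noteq> 0;
    Y \<noteq> 0; 1-y \<noteq> 0; 1-Y \<noteq> 0; y+a \<noteq> 0; Y+A \<noteq> 0\<rbrakk> \<Longrightarrow>
   (v::real) * ((Y/(A-Y)) / (y/(a-y))) * ((Y+A)/(y+a)) / ((((Y+A)/(1-Y)) / ((y+a)/(1-y))) / ((A/(1-A)) / (a/(1-a)))) = v * (Y*(a-y)*(1-Y)*A*(1-a)/((A-Y)*y*(1-y)*a*(1-A)))"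
  apply (simp only: divide_divide_eq_left divide_divide_eq_right times_divide_eq_left times_divide_eq_right)
  apply (subst frac_eq_eq)
    apply simp
   apply simp
  apply (simp add: algebra_simps)
  done

lemma Fr1: "\<lbrakk>1-a \<noteq> 0; a \<noteq> 0; 1-A \<noteq> 0; A \<noteq> 0; A-Y \<noteq> 0; a-y \<noteq> 0; (y::real) \<noteq> 0;
    Y \<noteq> 0; 1-y \<noteq> 0; 1-Y \<noteq> 0; y+a \<noteq> 0; Y+A \<noteq> 0\<rbrakk> \<Longrightarrow>
   (Y*(a-y)*(1-Y)*A*(1-a)/((A-Y)*y*(1-y)*a*(1-A)))*y*A/(a*Y) = ((a-y)*(1-Y)*A^2*(1-a)) / ((A-Y)*(1-y)*a^2*(1-A))"
  apply (simp only: divide_divide_eq_left divide_divide_eq_right times_divide_eq_left times_divide_eq_right)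
  apply (subst frac_eq_eq)
    apply simp
   apply simp
  apply (simp add: algebra_simps power2_eq_square)
  done
lemma Fr0: "\<lbrakk>1-a \<noteq> 0; a \<noteq> 0; 1-A \<noteq> 0; A \<noteq> 0; A-Y \<noteq> 0; a-y \<noteq> 0; (y::real) \<noteq> 0;
    Y \<noteq> 0; 1-y \<noteq> 0; 1-Y \<noteq> 0; y+a \<noteq> 0; Y+A \<noteq> 0\<rbrakk> \<Longrightarrow>
   (Y*(a-y)*(1-Y)*A*(1-a)/((A-Y)*y*(1-y)*a*(1-A)))*y*(Y+A)/(Y*(y+a)) = ((a-y)*(1-a)*(Y+A)*(1-Y)*A) / ((A-Y)*(1-A)*(y+a)*(1-y)*a)"
  apply (simp only: divide_divide_eq_left divide_divide_eq_right times_divide_eq_left times_divide_eq_right)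
  apply (subst frac_eq_eq)
    apply simp
   apply simp
  apply (simp add: algebra_simps power2_eq_square)
  done

lemma fl: "0<(b::real) \<Longrightarrow> 0<d \<Longrightarrow> a*d < c*b \<Longrightarrow> a/b < c/d"
  by (simp add: field_simps)
lemma fle: "0<(b::real) \<Longrightarrow> 0<d \<Longrightarrow> a*d \<le> c*b \<Longrightarrow> a/b \<le> c/d"
  by (simp add: field_simps)
lemma neg_frac: "(p::real) / q = (-p)/(-q)" by simp
lemma neg_frac2: "-((p::real) / (q-r)) = p/(r-q)" by (simp add: minus_divide_right)

theorem lemma4p1:
  fixes x y z x' y' z' :: real
  assumes hx: "x \<in> {-1<..<0}" and hx': "x' \<in> {-1<..<0}"
    and h1: "poinc 0 (-1) x' > poinc 0 (-1) x"
    and hy: "y \<in> {0<..<-x}" and hy': "y' \<in> {0<..<-x'}"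
    and h2: "poinc x' 1 y' \<ge> poinc x 1 y + (poinc 0 (-1) x' - poinc 0 (-1) x)"
    and hz: "0 \<le> z" "z < y" and hz': "z' \<in> {-y'<..<y'}"
    and h3: "poinc y' x' z' \<ge> poinc y x z + (poinc 0 (-x') y' - poinc 0 (-x) y)
              + ln ((y' - x') / (y - x))
              - ((poinc x' 1 y' - poinc x 1 y) - (poinc 0 (-1) x' - poinc 0 (-1) x))"
  shows "poinc y' (-y') z' > poinc y (-y) z"
proof -
  define a where "a = -x"
  define A where "A = -x'"
  define Y where "Y = y'"
  have xa: "x = -a" and xA: "x' = -A" unfolding a_def A_def by simp_all
  have a0: "0<a" "a<1" and A0: "0<A" "A<1" using hx hx' unfolding a_def A_def by auto
  have y0: "0<y" "y<a" and Y0: "0<Y" "Y<A" using hy hy' unfolding a_def A_def Y_def by auto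
  have z'0: "-Y < z'" "z' < Y" using hz' unfolding Y_def by auto
  have P1: "\<And>w. poinc 0 (-1) (-w) = ln (w/(1-w))"
    unfolding poinc_def by (subst neg_frac) simp
  have P2: "\<And>w v. poinc (-w) 1 v = ln ((v+w)/(1-v))"
    unfolding poinc_def by simp
  have P3: "\<And>w v. poinc 0 (-(-w)) v = ln (v/(w-v))"
    unfolding poinc_def by simp
  have P4: "\<And>w v u. poinc v (-w) u = ln ((v-u)/(u+w))"
    unfolding poinc_def by (subst neg_frac) (simp add: algebra_simps)
  have h1': "ln (a/(1-a)) < ln (A/(1-A))" using h1 unfolding xa xA P1 .
  hence "a/(1-a) < A/(1-A)" using a0 A0 by simp
  hence "a*(1-A) < A*(1-a)" using a0 A0 by (simp add: divide_simps)
  hence aA: "a < A" by (simp add: algebra_simps)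
  have h2': "ln ((y+a)/(1-y)) + (ln (A/(1-A)) - ln (a/(1-a))) \<le> ln ((Y+A)/(1-Y))"
    using h2 unfolding xa xA P1 P2 Y_def .
  have "exp (ln ((y+a)/(1-y)) + (ln (A/(1-A)) - ln (a/(1-a)))) \<le> exp (ln ((Y+A)/(1-Y)))"
    using h2' by simp
  hence "(y+a)/(1-y) * ((A/(1-A)) / (a/(1-a))) \<le> (Y+A)/(1-Y)"
    using a0 A0 y0 Y0 by (simp add: exp_add exp_diff)
  hence hK: "(y+a)*(1-a)*(1-Y)*A \<le> (Y+A)*(1-A)*(1-y)*a"
    using a0 A0 y0 Y0 by (simp add: divide_simps mult_ac)
  have c1: "(A-Y)*(1-y)*a^2*(1-A) < (a-y)*(1-Y)*A^2*(1-a)"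
    using c1_aux[OF a0(1) aA A0(2) y0 Y0 hK] .
  have c0: "(A-Y)*(1-A)*(y+a)*(1-y)*a < (a-y)*(1-a)*(Y+A)*(1-Y)*A"
    using c0_aux[OF a0(1) aA A0(2) y0 Y0 hK] .
  have nz: "1-a \<noteq> 0" "a \<noteq> 0" "1-A \<noteq> 0" "A \<noteq> 0" "A-Y \<noteq> 0" "a-y \<noteq> 0" "y \<noteq> 0"
    "Y \<noteq> 0" "1-y \<noteq> 0" "1-Y \<noteq> 0" "y+a \<noteq> 0" "Y+A \<noteq> 0"
    using a0 A0 y0 Y0 by auto
  define v where "v = (y-z)/(z+a)"
  define v' where "v' = (Y-z')/(z'+A)"
  define F where "F = Y*(a-y)*(1-Y)*A*(1-a)/((A-Y)*y*(1-y)*a*(1-A))"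
  have h3': "ln v' \<ge> ln v + (ln (Y/(A-Y)) - ln (y/(a-y))) + ln ((Y+A)/(y+a))
      - ((ln ((Y+A)/(1-Y)) - ln ((y+a)/(1-y))) - (ln (A/(1-A)) - ln (a/(1-a))))"
    using h3 unfolding xa xA P1 P2 P3 P4 v_def v'_def Y_def by (simp add: algebra_simps neg_frac2)
  have vpos: "v > 0" unfolding v_def using hz a0 by simp
  have v'pos: "v' > 0" unfolding v'_def using z'0 A0 Y0 by simp
  have "exp (ln v + (ln (Y/(A-Y)) - ln (y/(a-y))) + ln ((Y+A)/(y+a))
      - ((ln ((Y+A)/(1-Y)) - ln ((y+a)/(1-y))) - (ln (A/(1-A)) - ln (a/(1-a))))) \<le> exp (ln v')"
    using h3' by simp
  hence "v * ((Y/(A-Y)) / (y/(a-y))) * ((Y+A)/(y+a)) / ((((Y+A)/(1-Y)) / ((y+a)/(1-y))) / ((A/(1-A)) / (a/(1-a)))) \<le> v'"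
    using a0 A0 y0 Y0 aA vpos v'pos by (simp add: exp_add exp_diff)
  moreover have "v * ((Y/(A-Y)) / (y/(a-y))) * ((Y+A)/(y+a)) / ((((Y+A)/(1-Y)) / ((y+a)/(1-y))) / ((A/(1-A)) / (a/(1-a)))) = v * F"
    unfolding F_def by (rule Fid[OF nz])
  ultimately have vF: "v * F \<le> v'" by simp
  have Fpos: "F > 0" unfolding F_def using a0 A0 y0 Y0 aA by simp
  have G0: "F*A*y - Y*a > 0"
  proof -
    have "F*y*A/(a*Y) = ((a-y)*(1-Y)*A^2*(1-a)) / ((A-Y)*(1-y)*a^2*(1-A))"
      unfolding F_def by (rule Fr1[OF nz])
    also have "\<dots> > 1" using c1 a0 A0 y0 Y0 aA by simp
    finally have r: "1 < F*y*A/(a*Y)" .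
    have "a*Y > 0" using a0 Y0 by simp
    hence "a*Y < F*y*A" using r by (simp add: less_divide_eq_1_pos)
    thus ?thesis by (simp add: algebra_simps)
  qed
  have G1: "F*(A*y+Y*y) - Y*(y+a) > 0"
  proof -
    have "F*y*(Y+A)/(Y*(y+a)) = ((a-y)*(1-a)*(Y+A)*(1-Y)*A) / ((A-Y)*(1-A)*(y+a)*(1-y)*a)"
      unfolding F_def by (rule Fr0[OF nz])
    also have "\<dots> > 1" using c0 a0 A0 y0 Y0 aA by simp
    finally have r: "1 < F*y*(Y+A)/(Y*(y+a))" .
    have "Y*(y+a) > 0" using a0 y0 Y0 by simp
    hence "Y*(y+a) < F*y*(Y+A)" using r by (simp add: less_divide_eq_1_pos)
    thus ?thesis by (simp add: algebra_simps)
  qed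
  define G where "G = F*(A*y+Y*z) - Y*(z+a)"
  have "y*G = (y-z)*(F*A*y - Y*a) + z*(F*(A*y+Y*y) - Y*(y+a))"
    unfolding G_def by (simp add: algebra_simps)
  moreover have "(y-z)*(F*A*y - Y*a) > 0" using G0 hz by simp
  moreover have "z*(F*(A*y+Y*y) - Y*(y+a)) \<ge> 0" using G1 hz by simp
  ultimately have "y*G > 0" by linarith
  hence Gpos: "G > 0" using y0 by (simp add: zero_less_mult_iff)
  define w where "w = v*F"
  have wpos: "w > 0" unfolding w_def using vpos Fpos by simp
  have "z'+A > 0" using z'0 Y0 by simp
  hence d: "w*(z'+A) \<le> Y - z'" using vF unfolding w_def v'_def by (simp add: pos_le_divide_eq)
  have D1: "2*Y + w*(Y-A) > 0"
  proof -
    have "w*(A-Y) < w*(z'+A)" using wpos z'0 by simp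
    thus ?thesis using d z'0 by (simp add: algebra_simps)
  qed
  have "(z+a)*(w*(Y+A)*(y+z) - (y-z)*(2*Y+w*(Y-A))) = 2*(y-z)*G"
  proof -
    have zw: "(z+a)*w = (y-z)*F" unfolding w_def v_def using a0 hz by simp
    have "(z+a)*(w*(Y+A)*(y+z) - (y-z)*(2*Y+w*(Y-A))) = ((z+a)*w)*((Y+A)*(y+z) - (y-z)*(Y-A)) - (z+a)*(y-z)*2*Y"
      by (simp add: algebra_simps)
    also have "\<dots> = 2*(y-z)*G" unfolding zw G_def by (simp add: algebra_simps)
    finally show ?thesis .
  qed
  moreover have "2*(y-z)*G > 0" using hz Gpos by simp
  ultimately have X: "(z+a)*(w*(Y+A)*(y+z) - (y-z)*(2*Y+w*(Y-A))) > 0" by linarith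
  have "z+a > 0" using a0 hz by simp
  hence "w*(Y+A)*(y+z) - (y-z)*(2*Y+w*(Y-A)) > 0" using X zero_less_mult_pos by blast
  hence i1: "(y-z)/(y+z) < w*(Y+A)/(2*Y+w*(Y-A))" using D1 y0 hz by (intro fl) auto
  have "(Y-z')*(2*Y+w*(Y-A)) - w*(Y+A)*(Y+z') = 2*Y*((Y-z') - w*(z'+A))" by (simp add: algebra_simps)
  moreover have "2*Y*((Y-z') - w*(z'+A)) \<ge> 0" using d Y0 by simp
  ultimately have "w*(Y+A)*(Y+z') \<le> (Y-z')*(2*Y+w*(Y-A))" by linarith
  hence i2: "w*(Y+A)/(2*Y+w*(Y-A)) \<le> (Y-z')/(Y+z')" using D1 z'0 by (intro fle) auto
  have u: "(y-z)/(y+z) < (Y-z')/(Y+z')" using i1 i2 by linarith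
  have "poinc y (-y) z = ln ((y-z)/(z+y))" by (rule P4)
  moreover have "poinc y' (-y') z' = ln ((Y-z')/(z'+Y))" unfolding Y_def by (rule P4)
  moreover have "(y-z)/(y+z) > 0" using hz by simp
  ultimately show ?thesis using u by (simp add: add.commute)
qed

end
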